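(* Let $n\ge1$, $\lambda>0$, and let $\{e_m\}_{1\le m\le n}\cup\{f_{m,k}\}_{1\le m,k\le n}$ be $n^2+n$ independent exponential random variables with parameter $\lambda$. For $k=1,\ldots,n$ let $\mathcal{T}^k=\max_{1\le m\le n}\,(e_m+f_{m,k})$. Then $$\mathbb{E}\left[\max_{1\le k\le n}\max\{e_k,\mathcal{T}^k\}\right]\le\frac{2H_{n^2+n}}{\lambda},$$ where $H_N=\sum_{j=1}^N\frac1j$ is the $N$-th harmonic number.
   Context: In the paper, $e_k$ is the delay of the supervisor's trigger message to worker $k$ and $\mathcal{T}^k$ is the time at which worker $k$ has received all its "redirect" messages, each being a two-message chain (trigger to worker $m$, then redirect from $m$ to $k$); the abstract formulation above records this structure. *)

theory Defs
  imports "HOL-Probability.Probability"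
begin

definition redirect_time :: "nat \<Rightarrow> (nat \<Rightarrow> real) \<Rightarrow> (nat \<Rightarrow> nat \<Rightarrow> real) \<Rightarrow> nat \<Rightarrow> real" where
  "redirect_time n e f k = Max ((\<lambda>m. e m + f m k) ` {1..n})"

end

theory Submission
  imports Defs "HOL-Analysis.Analysis"
begin

lemma exp_excess:
  fixes M :: "'a measure" and X :: "'a \<Rightarrow> real"
  assumes l: "0 < l" and t: "0 \<le> t"
    and D: "distributed M lborel X (exponential_density l)"
  shows "has_bochner_integral M (\<lambda>\<omega>. max 0 (X \<omega> - t)) (exp (- t * l) / l)"
proof (rule has_bochner_integral_nn_integral)
  have Xm[measurable]: "X \<in> borel_measurable M"
    using distributed_measurable[OF D] by simp
  show "(\<lambda>\<omega>. max 0 (X \<omega> - t)) \<in> borel_measurable M" by measurable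
  show "AE x in M. 0 \<le> max 0 (X x - t)" by simp
  show "0 \<le> exp (- t * l) / l" using l by simp
  have "(\<integral>\<^sup>+\<omega>. ennreal (max 0 (X \<omega> - t)) \<partial>M)
      = (\<integral>\<^sup>+x. ennreal (exponential_density l x) * ennreal (max 0 (x - t)) \<partial>lborel)"
    by (subst distributed_nn_integral[OF D, symmetric]) auto
  also have "\<dots> = (\<integral>\<^sup>+x. ennreal (exponential_density l (t + x)) * ennreal (max 0 x) \<partial>lborel)"
    using nn_integral_real_affine[where c=1 and t=t and f="\<lambda>x. ennreal (exponential_density l x) * ennreal (max 0 (x - t))"]
    by simp
  also have "\<dots> = (\<integral>\<^sup>+x. ennreal (exp (- t * l)) * ennreal (exponential_density l x * x ^ 1) \<partial>lborel)"
    using t l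
    by (intro nn_integral_cong)
       (auto simp: exponential_density_def ennreal_mult'[symmetric] exp_add[symmetric] algebra_simps ennreal_neg)
  also have "\<dots> = ennreal (exp (- t * l)) * (\<integral>\<^sup>+x. ennreal (exponential_density l x * x ^ 1) \<partial>lborel)"
    by (rule nn_integral_cmult) auto
  also have "\<dots> = ennreal (exp (- t * l)) * ennreal (1 / l)"
    using nn_integral_erlang_ith_moment[OF l, of 0 1] by simp
  also have "\<dots> = ennreal (exp (- t * l) / l)"
    using l by (simp add: ennreal_mult'[symmetric])
  finally show "(\<integral>\<^sup>+\<omega>. ennreal (max 0 (X \<omega> - t)) \<partial>M) = ennreal (exp (- t * l) / l)" .
qed

lemma num_bound:
  fixes n :: nat assumes n: "n \<ge> 1"
  shows "3 * ln (real n) + 2 \<le> 2 * harm (n^2 + n)"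
proof (cases "n \<ge> 5")
  case True
  have e: "exp 1 < (272/100::real)" by (rule e_less_272)
  have e2: "exp 2 \<le> (7.4::real)"
  proof -
    have "exp (2::real) = exp 1 * exp 1" by (simp flip: exp_add)
    also have "\<dots> \<le> (272/100) * (272/100)" using e
      by (intro mult_mono) auto
    finally show ?thesis by simp
  qed
  have rn: "real n \<ge> 5" using True by simp
  have poly: "7.4 * real n ^ 3 \<le> (real n ^ 2 + real n + 1) ^ 2"
  proof -
    define x where "x = real n"
    have x5: "x \<ge> 5" using rn x_def by simp
    have "(2.3::real)^2 \<le> (x - 2.7)^2" using x5 by (intro power_mono) auto
    then have q: "0 \<le> x^2 - 5.4 * x + 3" by (simp add: power2_eq_square algebra_simps)
    have "0 \<le> x^2 * (x^2 - 5.4 * x + 3)" using q by simp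
    moreover have "0 \<le> 2 * x + 1" using x5 by simp
    ultimately have "7.4 * x ^ 3 \<le> (x ^ 2 + x + 1) ^ 2"
      by (simp add: power2_eq_square power3_eq_cube algebra_simps)
    then show ?thesis by (simp add: x_def)
  qed
  have "3 * ln (real n) + 2 = ln (exp 2 * real n ^ 3)"
    using rn by (simp add: ln_mult ln_realpow)
  also have "\<dots> \<le> ln ((real n ^ 2 + real n + 1) ^ 2)"
  proof (rule ln_mono)
    show "0 < exp 2 * real n ^ 3" using rn by simp
    have "exp 2 * real n ^ 3 \<le> 7.4 * real n ^ 3" using e2 rn by (intro mult_right_mono) auto
    then show "exp 2 * real n ^ 3 \<le> (real n ^ 2 + real n + 1) ^ 2" using poly by linarith
  qed
  also have "\<dots> = 2 * ln (real (n^2 + n) + 1)"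
    using rn by (simp add: ln_realpow)
  also have "\<dots> \<le> 2 * harm (n^2 + n)" using ln_le_harm[of "n^2+n"] by simp
  finally show ?thesis .
next
  case False
  have l2: "ln (2::real) \<le> 25/36" by (rule ln2_le_25_over_36)
  have l4: "ln (4::real) = 2 * ln 2"
    using ln_realpow[of 2 2] by simp
  have l3: "ln (3::real) \<le> ln 4" by simp
  from False n have "n = 1 \<or> n = 2 \<or> n = 3 \<or> n = 4" by auto
  then show ?thesis
  proof (elim disjE)
    assume "n = 1" then show ?thesis by (simp add: harm_def)
  next
    assume "n = 2" then show ?thesis using l2 by (simp add: harm_def numeral_eq_Suc)
  next
    assume "n = 3" then show ?thesis using l2 l3 l4 by (simp add: harm_def numeral_eq_Suc)
  next
    assume "n = 4" then show ?thesis using l2 l4 by (simp add: harm_def numeral_eq_Suc)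
  qed
qed


theorem lemma3:
  fixes M :: "'a measure" and n :: nat and l :: real
    and e :: "nat \<Rightarrow> 'a \<Rightarrow> real" and f :: "nat \<Rightarrow> nat \<Rightarrow> 'a \<Rightarrow> real"
  assumes "prob_space M"
    and "n \<ge> 1" and "l > 0"
    and "\<And>m. m \<in> {1..n} \<Longrightarrow> distributed M lborel (e m) (exponential_density l)"
    and "\<And>m k. m \<in> {1..n} \<Longrightarrow> k \<in> {1..n} \<Longrightarrow>
           distributed M lborel (f m k) (exponential_density l)"
    and "prob_space.indep_vars M (\<lambda>_. borel)
           (\<lambda>i. case i of Inl m \<Rightarrow> e m | Inr (m, k) \<Rightarrow> f m k)
           ({1..n} <+> ({1..n} \<times> {1..n}))"
  shows "prob_space.expectation M
           (\<lambda>\<omega>. Max ((\<lambda>k. max (e k \<omega>) (redirect_time n (\<lambda>m. e m \<omega>) (\<lambda>m k. f m k \<omega>) k)) ` {1..n}))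
         \<le> 2 * harm (n^2 + n) / l"
proof -
  interpret prob_space M by fact
  have n: "n \<ge> 1" and l: "l > 0" by fact+
  have rn: "real n \<ge> 1" using n by simp
  define t1 where "t1 = ln (real n) / l"
  define t2 where "t2 = 2 * ln (real n) / l"
  have t1: "0 \<le> t1" using rn l by (simp add: t1_def)
  have t2: "0 \<le> t2" using rn l by (simp add: t2_def)
  define P where "P = {1..n} \<times> {1..n}"
  define R where "R = (\<lambda>\<omega>. t1 + t2 + (\<Sum>m\<in>{1..n}. max 0 (e m \<omega> - t1))
      + (\<Sum>p\<in>P. max 0 (f (fst p) (snd p) \<omega> - t2)))"
  define G where "G = (\<lambda>\<omega>. Max ((\<lambda>k. max (e k \<omega>) (redirect_time n (\<lambda>m. e m \<omega>) (\<lambda>m k. f m k \<omega>) k)) ` {1..n}))"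
  have finP: "finite P" by (simp add: P_def)
  have pw: "G \<omega> \<le> R \<omega>" for \<omega>
  proof -
    let ?SE = "\<Sum>m\<in>{1..n}. max 0 (e m \<omega> - t1)"
    let ?SF = "\<Sum>p\<in>P. max 0 (f (fst p) (snd p) \<omega> - t2)"
    have SF0: "0 \<le> ?SF" by (intro sum_nonneg) auto
    have eb: "e m \<omega> \<le> t1 + ?SE" if "m \<in> {1..n}" for m
    proof -
      have "max 0 (e m \<omega> - t1) \<le> ?SE"
        by (rule member_le_sum) (use that in auto)
      then show ?thesis by linarith
    qed
    have fb: "f m k \<omega> \<le> t2 + ?SF" if "m \<in> {1..n}" "k \<in> {1..n}" for m k
    proof -
      have "max 0 (f (fst (m,k)) (snd (m,k)) \<omega> - t2) \<le> ?SF"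
        by (rule member_le_sum) (use that in \<open>auto simp: P_def\<close>)
      then show ?thesis by simp
    qed
    show ?thesis unfolding G_def
    proof (subst Max_le_iff, simp, use n in simp, clarify)
      fix k assume k: "k \<in> {1..n}"
      have "e k \<omega> \<le> R \<omega>" using eb[OF k] SF0 t2 by (simp add: R_def)
      moreover have "redirect_time n (\<lambda>m. e m \<omega>) (\<lambda>m k. f m k \<omega>) k \<le> R \<omega>"
        unfolding redirect_time_def
      proof (subst Max_le_iff, simp, use n in simp, clarify)
        fix m assume m: "m \<in> {1..n}"
        show "e m \<omega> + f m k \<omega> \<le> R \<omega>" using eb[OF m] fb[OF m k] by (simp add: R_def)
      qed
      ultimately show "max (e k \<omega>) (redirect_time n (\<lambda>m. e m \<omega>) (\<lambda>m k. f m k \<omega>) k) \<le> R \<omega>"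
        by simp
    qed
  qed
  have he: "has_bochner_integral M (\<lambda>\<omega>. max 0 (e m \<omega> - t1)) (exp (- t1 * l) / l)"
    if "m \<in> {1..n}" for m
    by (rule exp_excess[OF l t1 assms(4)[OF that]])
  have hf: "has_bochner_integral M (\<lambda>\<omega>. max 0 (f (fst p) (snd p) \<omega> - t2)) (exp (- t2 * l) / l)"
    if "p \<in> P" for p
    by (rule exp_excess[OF l t2 assms(5)]) (use that in \<open>auto simp: P_def\<close>)
  have hc: "has_bochner_integral M (\<lambda>_. c) c" for c :: real
    by (simp add: has_bochner_integral_iff prob_space)
  have hR: "has_bochner_integral M R
      (t1 + t2 + (\<Sum>m\<in>{1..n}. exp (- t1 * l) / l) + (\<Sum>p\<in>P. exp (- t2 * l) / l))"
    unfolding R_def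
    by (intro has_bochner_integral_add has_bochner_integral_sum he hf hc) auto
  have cP: "card P = n^2" by (simp add: P_def power2_eq_square)
  have ex1: "exp (- t1 * l) = 1 / real n" using rn l
    by (simp add: t1_def exp_minus inverse_eq_divide)
  have e2n: "exp (2 * ln (real n)) = real n ^ 2"
  proof -
    have "exp (2 * ln (real n)) = exp (ln (real n) + ln (real n))" by simp
    also have "\<dots> = real n * real n" using rn by (simp only: exp_add) simp
    finally show ?thesis by (simp add: power2_eq_square)
  qed
  have ex2: "exp (- t2 * l) = 1 / real n ^ 2" using rn l
    by (simp add: t2_def exp_minus inverse_eq_divide e2n)
  have val: "t1 + t2 + (\<Sum>m\<in>{1..n}. exp (- t1 * l) / l) + (\<Sum>p\<in>P. exp (- t2 * l) / l)
      = (3 * ln (real n) + 2) / l"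
    unfolding ex1 ex2 using rn l by (simp add: cP) (simp add: t1_def t2_def field_simps)
  have "expectation G \<le> 2 * harm (n^2 + n) / l"
  proof (cases "integrable M G")
    case True
    have "expectation G \<le> expectation R"
      using True hR pw by (intro integral_mono) (auto simp: has_bochner_integral_iff)
    also have "\<dots> = (3 * ln (real n) + 2) / l"
      using hR val by (simp add: has_bochner_integral_iff)
    also have "\<dots> \<le> 2 * harm (n^2 + n) / l"
      using num_bound[OF n] l by (simp add: divide_right_mono)
    finally show ?thesis .
  next
    case False
    then have "expectation G = 0" by (rule not_integrable_integral_eq)
    then show ?thesis using l by (simp add: harm_nonneg)
  qed
  then show ?thesis by (simp add: G_def)
qed

end
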